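(* Let $\ell,r$ be integers with $r\ge 2$ and $\ell\ge 2r$, and let $m=m_{r,\ell}$. Define $H(q)=(m-q)\,(q)_{r-1}$ for integers $q\in[0,m]$. Then $H(q)<H(m-1)$ for all integers $q\in[0,m]\setminus\{m-1\}$.
   Context: For an integer $z$ and positive integer $k$, $(z)_k=z(z-1)\cdots(z-k+1)$ if $z>k-1$ and $(z)_k=0$ otherwise. $m_{r,\ell}$ is the unique integer $k\ge r$ maximizing $f(k)=\frac{(k-1)(k-2)\cdots(k-r+1)}{k^{\ell-1}}$ over all integers $k\ge r$. *)

theory Defs
  imports Complex_Main
begin

definition falling_int :: "int \<Rightarrow> nat \<Rightarrow> int" where
  "falling_int z k = (if z > int k - 1 then (\<Prod>i<k. z - int i) else 0)"

definition f_rl :: "nat \<Rightarrow> nat \<Rightarrow> int \<Rightarrow> real" where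
  "f_rl r l k = (\<Prod>i\<in>{1..r-1}. real_of_int (k - int i)) / (real_of_int k) ^ (l - 1)"

definition m_rl :: "nat \<Rightarrow> nat \<Rightarrow> int" where
  "m_rl r l = (THE k. k \<ge> int r \<and> (\<forall>j. j \<ge> int r \<longrightarrow> f_rl r l j \<le> f_rl r l k))"

end

theory Submission
  imports Defs
begin

lemma prod_shift:
  fixes k :: int and s :: nat
  shows "(\<Prod>i\<in>{1..s}. real_of_int (k + 1 - int i)) * real_of_int (k - int s)
         = real_of_int k * (\<Prod>i\<in>{1..s}. real_of_int (k - int i))"
proof (induction s)
  case 0 then show ?case by simp
next
  case (Suc s)
  have "(\<Prod>i\<in>{1..Suc s}. real_of_int (k + 1 - int i)) * real_of_int (k - int (Suc s))
      = ((\<Prod>i\<in>{1..s}. real_of_int (k + 1 - int i)) * real_of_int (k - int s)) * real_of_int (k - int (Suc s))"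
    by (simp add: prod.cl_ivl_Suc)
  also have "\<dots> = real_of_int k * (\<Prod>i\<in>{1..Suc s}. real_of_int (k - int i))"
    using Suc.IH by (simp add: prod.cl_ivl_Suc)
  finally show ?case .
qed

lemma prodP_pos:
  fixes k :: int and s :: nat
  assumes "k > int s"
  shows "(\<Prod>i\<in>{1..s}. real_of_int (k - int i)) > 0"
  using assms by (intro prod_pos) auto

lemma S_iff:
  fixes x s :: real and n :: nat
  assumes "x > 0"
  shows "(s < x * (1 - (x/(x+1))^n)) \<longleftrightarrow> x^(n+1) < (x - s) * (x+1)^n"
proof -
  have p: "(x+1)^n > 0" using assms by simp
  have "x * (x/(x+1))^n = x^(n+1) / (x+1)^n" by (simp add: power_divide)
  hence "(s < x * (1 - (x/(x+1))^n)) \<longleftrightarrow> x^(n+1) / (x+1)^n < x - s"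
    by (simp add: algebra_simps)
  also have "\<dots> \<longleftrightarrow> x^(n+1) < (x - s) * (x+1)^n" using p by (simp add: pos_divide_less_eq)
  finally show ?thesis .
qed

lemma S_sum:
  fixes x :: real and n :: nat
  assumes "x > 0"
  shows "x * (1 - (x/(x+1))^n) = (\<Sum>j<n. (x/(x+1))^(Suc j))"
proof -
  have "x * (1 - x/(x+1)) = x/(x+1)" using assms by (simp add: field_simps)
  have "x * (1 - (x/(x+1))^n) = x * (1 - x/(x+1)) * (\<Sum>j<n. (x/(x+1))^j)"
    by (simp only: one_diff_power_eq mult.assoc)
  also have "\<dots> = (\<Sum>j<n. (x/(x+1))^(Suc j))"
    using \<open>x * (1 - x/(x+1)) = x/(x+1)\<close> by (simp add: sum_distrib_left)
  finally show ?thesis .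
qed

lemma S_mono:
  fixes x y :: real and n :: nat
  assumes "0 < x" "x < y" "n \<ge> 1"
  shows "x * (1 - (x/(x+1))^n) < y * (1 - (y/(y+1))^n)"
proof -
  have a: "x/(x+1) < y/(y+1)" using assms by (simp add: field_simps)
  have b: "0 \<le> x/(x+1)" using assms by simp
  have "(\<Sum>j<n. (x/(x+1))^(Suc j)) < (\<Sum>j<n. (y/(y+1))^(Suc j))"
  proof (rule sum_strict_mono)
    have "0 \<in> {..<n}" using assms by simp
    thus "{..<n} \<noteq> {}" by blast
    fix j assume "j \<in> {..<n}"
    show "(x/(x+1))^(Suc j) < (y/(y+1))^(Suc j)" using power_strict_mono[OF a b] by blast
  qed (use assms in \<open>auto simp: set_eq_iff\<close>)
  thus ?thesis using S_sum assms by simp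
qed

lemma noneq:
  fixes k s :: int and n :: nat
  assumes "k \<ge> 1" "n \<ge> 1"
  shows "k^(n+1) \<noteq> (k - s) * (k+1)^n"
proof
  assume h: "k^(n+1) = (k - s) * (k+1)^n"
  have "(k+1) dvd (k+1)^n" using assms by (simp add: dvd_power)
  hence "(k+1) dvd k^(n+1)" using h by simp
  moreover have "coprime (k+1) (k^(n+1))"
    by (simp add: coprime_add_one_left)
  ultimately have "is_unit (k+1)" by (meson coprime_common_divisor dvd_refl)
  thus False using assms by auto
qed

lemma bern:
  fixes x n :: nat
  shows "x^(n+1) + (n+1)*x^n \<le> (x+1)^(n+1)"
proof (induction n)
  case 0 then show ?case by simp
next
  case (Suc n)
  have "(x+1)^(Suc n+1) = (x+1)*(x+1)^(n+1)" by simp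
  also have "\<dots> \<ge> (x+1)*(x^(n+1) + (n+1)*x^n)" using Suc.IH by (intro mult_le_mono2)
  finally have "(x+1)^(Suc n+1) \<ge> (x+1)*(x^(n+1) + (n+1)*x^n)" .
  moreover have "(x+1)*(x^(n+1) + (n+1)*x^n) \<ge> x^(Suc n+1) + (Suc n+1)*x^(Suc n)"
    by (smt (verit, del_insts) Suc_eq_plus1 distrib_right le_add1
    left_add_mult_distrib mult.left_commute power_Suc)
  ultimately show ?case by linarith
qed

lemma bern2:
  fixes x n :: nat
  assumes "x \<ge> 1" "n \<ge> x + 1"
  shows "2 * x^n < (x+1)^n"
proof -
  obtain m where m: "n = m + 1" using assms by (metis add.commute add_Suc_right le_Suc_ex plus_1_eq_Suc)
  have "x^(m+1) + (m+1)*x^m \<le> (x+1)^(m+1)" by (rule bern)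
  moreover have "(m+1)*x^m \<ge> (x+1)*x^m" using assms m by (intro mult_le_mono1) simp
  moreover have "(x+1)*x^m > x^(m+1)" using assms by simp
  ultimately show ?thesis unfolding m by linarith
qed



lemma f_cmp:
  fixes r l :: nat and k :: int
  assumes "r \<ge> 2" "k \<ge> int r"
  shows "(f_rl r l (k+1) < f_rl r l k \<longleftrightarrow> k^(l-1+1) < (k - int (r-1)) * (k+1)^(l-1))
       \<and> (f_rl r l k < f_rl r l (k+1) \<longleftrightarrow> (k - int (r-1)) * (k+1)^(l-1) < k^(l-1+1))"
proof -
  define s where "s = r - 1"
  define n where "n = l - 1"
  define P where "P = (\<lambda>k. (\<Prod>i\<in>{1..s}. real_of_int (k - int i)))"
  have fk: "f_rl r l k = P k / (real_of_int k)^n" unfolding f_rl_def P_def s_def n_def by simp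
  have fk1: "f_rl r l (k+1) = P (k+1) / (real_of_int k + 1)^n" unfolding f_rl_def P_def s_def n_def by simp
  have ks: "k - int s > 0" using assms unfolding s_def by simp
  have kpos: "real_of_int k > 0" using assms by simp
  have Ppos: "P k > 0" unfolding P_def using prodP_pos[where k=k and s=s] ks by simp
  have Psh: "P (k+1) * real_of_int (k - int s) = real_of_int k * P k"
    unfolding P_def using prod_shift[where k=k and s=s] by (simp add: algebra_simps)
  have P1: "P (k+1) = real_of_int k * P k / real_of_int (k - int s)"
    using Psh ks by (simp add: field_simps)
  define K where "K = real_of_int k"
  define T where "T = real_of_int (k - int s)"
  have Tpos: "T > 0" using ks unfolding T_def by simp
  have Kpos: "K > 0" using kpos unfolding K_def .
  have e1: "f_rl r l (k+1) = K * P k / (T * (K+1)^n)" using fk1 P1 unfolding K_def T_def by simp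
  have e2: "f_rl r l k = P k / K^n" using fk unfolding K_def by simp
  have pp: "T * (K+1)^n > 0" "K^n > 0" using Tpos Kpos by auto
  have c1: "f_rl r l (k+1) < f_rl r l k \<longleftrightarrow> K^(n+1) < T * (K+1)^n"
  proof -
    have "f_rl r l (k+1) < f_rl r l k \<longleftrightarrow> K * P k * K^n < P k * (T * (K+1)^n)"
      unfolding e1 e2 using pp by (simp add: divide_less_eq less_divide_eq)
    also have "\<dots> \<longleftrightarrow> K^(n+1) * P k < (T * (K+1)^n) * P k" by (simp add: algebra_simps)
    also have "\<dots> \<longleftrightarrow> K^(n+1) < T * (K+1)^n" using Ppos by simp
    finally show ?thesis .
  qed
  have c2: "f_rl r l k < f_rl r l (k+1) \<longleftrightarrow> T * (K+1)^n < K^(n+1)"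
  proof -
    have "f_rl r l k < f_rl r l (k+1) \<longleftrightarrow> P k * (T * (K+1)^n) < K * P k * K^n"
      unfolding e1 e2 using pp by (simp add: divide_less_eq less_divide_eq)
    also have "\<dots> \<longleftrightarrow> (T * (K+1)^n) * P k < K^(n+1) * P k" by (simp add: algebra_simps)
    also have "\<dots> \<longleftrightarrow> T * (K+1)^n < K^(n+1)" using Ppos by simp
    finally show ?thesis .
  qed
  have q1: "real_of_int (k^(n+1)) = K^(n+1)" "real_of_int ((k - int s) * (k+1)^n) = T * (K+1)^n"
    unfolding K_def T_def by simp_all
  have i1: "K^(n+1) < T * (K+1)^n \<longleftrightarrow> k^(n+1) < (k - int s) * (k+1)^n"
    by (simp only: q1[symmetric] of_int_less_iff)
  have i2: "T * (K+1)^n < K^(n+1) \<longleftrightarrow> (k - int s) * (k+1)^n < k^(n+1)"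
    by (simp only: q1[symmetric] of_int_less_iff)
  show ?thesis using c1 c2 i1 i2 unfolding s_def n_def by simp
qed


lemma decr_iff_S:
  fixes k :: int and s n :: nat
  assumes "k \<ge> 1"
  shows "k^(n+1) < (k - int s)*(k+1)^n \<longleftrightarrow>
         real s < real_of_int k * (1 - (real_of_int k/(real_of_int k+1))^n)"
proof -
  have q1: "real_of_int (k^(n+1)) = (real_of_int k)^(n+1)"
     "real_of_int ((k - int s) * (k+1)^n) = (real_of_int k - real s) * (real_of_int k + 1)^n"
    by simp_all
  have "k^(n+1) < (k - int s)*(k+1)^n \<longleftrightarrow>
        (real_of_int k)^(n+1) < (real_of_int k - real s) * (real_of_int k + 1)^n"
    by (simp only: q1[symmetric] of_int_less_iff)
  also have "\<dots> \<longleftrightarrow> real s < real_of_int k * (1 - (real_of_int k/(real_of_int k+1))^n)"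
    using S_iff[of "real_of_int k" "real s" n] assms by simp
  finally show ?thesis .
qed

lemma decr_step:
  fixes k :: int and s n :: nat
  assumes "k \<ge> 1" "n \<ge> 1" "k^(n+1) < (k - int s)*(k+1)^n"
  shows "(k+1)^(n+1) < (k + 1 - int s)*(k+1+1)^n"
proof -
  have "real s < real_of_int k * (1 - (real_of_int k/(real_of_int k+1))^n)"
    using decr_iff_S assms by blast
  also have "\<dots> < real_of_int (k+1) * (1 - (real_of_int (k+1)/(real_of_int (k+1)+1))^n)"
    using S_mono[of "real_of_int k" "real_of_int (k+1)" n] assms by simp
  finally show ?thesis using decr_iff_S[of "k+1" n s] assms by simp
qed

lemma decr_base:
  fixes s n :: nat
  assumes "s \<ge> 1" "n \<ge> 2*s+1"
  shows "(int (2*s))^(n+1) < (int (2*s) - int s)*(int (2*s)+1)^n"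
proof -
  have b: "2 * (2*s)^n < (2*s+1)^n" using bern2[of "2*s" n] assms by simp
  have "(2*s)^(n+1) = s * (2 * (2*s)^n)" by (simp add: algebra_simps)
  also have "\<dots> < s * (2*s+1)^n" using b assms by simp
  finally have "(2*s)^(n+1) < s * (2*s+1)^n" .
  hence "int ((2*s)^(n+1)) < int (s * (2*s+1)^n)" by linarith
  moreover have "int (2*s) - int s = int s" by simp
  ultimately show ?thesis by (simp add: add.commute)
qed


lemma Qshift:
  fixes q :: int and s :: nat
  shows "(\<Prod>i<s. (q+1 - int i)) * (q + 1 - int s) = (q+1) * (\<Prod>i<s. (q - int i))"
proof (induction s)
  case 0 then show ?case by simp
next
  case (Suc s)
  have "(\<Prod>i<Suc s. (q+1 - int i)) * (q + 1 - int (Suc s))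
      = ((\<Prod>i<s. (q+1 - int i)) * (q + 1 - int s)) * (q - int s)" by simp
  also have "\<dots> = (q+1) * (\<Prod>i<Suc s. (q - int i))" using Suc.IH by simp
  finally show ?case .
qed

lemma Qpos:
  fixes q :: int and s :: nat
  assumes "q \<ge> int s"
  shows "(\<Prod>i<s. (q - int i)) > 0"
  using assms by (intro prod_pos) auto

lemma m_char:
  fixes l r :: nat
  assumes "r \<ge> 2" and "l \<ge> 2 * r"
  shows "int r \<le> m_rl r l \<and> m_rl r l \<le> 2 * int r - 2"
proof -
  define s where "s = r - 1"
  define n where "n = l - 1"
  have s1: "s \<ge> 1" "int r = int s + 1" using assms unfolding s_def by auto
  have n1: "n \<ge> 2*s+1" "n \<ge> 1" using assms unfolding s_def n_def by auto
  define decr where "decr = (\<lambda>k::int. k^(n+1) < (k - int s)*(k+1)^n)"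
  have fA: "f_rl r l (k+1) < f_rl r l k" if "k \<ge> int r" "decr k" for k
    using f_cmp[OF assms(1) that(1)] that(2) unfolding decr_def s_def n_def by simp
  have fB: "f_rl r l k < f_rl r l (k+1)" if "k \<ge> int r" "\<not> decr k" for k
  proof -
    have "k^(n+1) \<noteq> (k - int s)*(k+1)^n" using noneq[of k n "int s"] that n1 s1 by simp
    hence "(k - int s)*(k+1)^n < k^(n+1)" using that(2) unfolding decr_def by auto
    thus ?thesis using f_cmp[OF assms(1) that(1)] unfolding s_def n_def by simp
  qed
  have fC: "decr (k+1)" if "k \<ge> int r" "decr k" for k
    using decr_step[of k n s] that n1 s1 unfolding decr_def by (simp add: algebra_simps)
  have base: "decr (int (2*s))" using decr_base[OF s1(1) n1(1)] unfolding decr_def by simp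
  have e2: "int r + int (r-2) = int (2*s)" using assms(1) unfolding s_def by simp
  have ex: "decr (int r + int (r-2))" using base by (simp only: e2)
  define t0 where "t0 = (LEAST t. decr (int r + int t))"
  have t0d: "decr (int r + int t0)" unfolding t0_def using ex by (rule LeastI)
  have t0le: "t0 \<le> r - 2" unfolding t0_def using ex by (rule Least_le)
  define m0 where "m0 = int r + int t0"
  have nod: "\<not> decr j" if "int r \<le> j" "j < m0" for j
  proof -
    define t where "t = nat (j - int r)"
    have t: "j = int r + int t" using that unfolding t_def by simp
    have "t < t0" using that t unfolding m0_def by simp
    thus ?thesis using not_less_Least[of t "\<lambda>t. decr (int r + int t)"] t unfolding t0_def by simp
  qed
  have alld: "decr j" if "j \<ge> m0" for j
    using that
  proof (induction j rule: int_ge_induct)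
    case base then show ?case using t0d unfolding m0_def .
  next
    case (step i) then show ?case using fC[of i] unfolding m0_def by simp
  qed
  have right: "f_rl r l j < f_rl r l m0" if "j \<ge> m0 + 1" for j
    using that
  proof (induction j rule: int_ge_induct)
    case base then show ?case using fA[of m0] alld[of m0] unfolding m0_def by simp
  next
    case (step i)
    have "f_rl r l (i+1) < f_rl r l i" using fA[of i] alld[of i] step unfolding m0_def by simp
    then show ?case using step by simp
  qed
  have left: "\<forall>j. int r \<le> m0 - 1 - int d \<longrightarrow> f_rl r l (m0 - 1 - int d) < f_rl r l m0" for d :: nat
  proof (induction d)
    case 0
    show ?case using fB[of "m0 - 1"] nod[of "m0 - 1"] by auto
  next
    case (Suc d)
    show ?case
    proof (intro allI impI)
      assume h: "int r \<le> m0 - 1 - int (Suc d)"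
      have "f_rl r l (m0 - 1 - int (Suc d)) < f_rl r l (m0 - 1 - int (Suc d) + 1)"
        using fB[of "m0 - 1 - int (Suc d)"] nod[of "m0 - 1 - int (Suc d)"] h by simp
      also have "m0 - 1 - int (Suc d) + 1 = m0 - 1 - int d" by simp
      also have "f_rl r l (m0 - 1 - int d) < f_rl r l m0" using Suc h by simp
      finally show "f_rl r l (m0 - 1 - int (Suc d)) < f_rl r l m0" .
    qed
  qed
  have mx: "f_rl r l j < f_rl r l m0" if "j \<ge> int r" "j \<noteq> m0" for j
  proof (cases "j > m0")
    case True then show ?thesis using right by simp
  next
    case False
    hence "j < m0" using that by simp
    define d where "d = nat (m0 - 1 - j)"
    have "j = m0 - 1 - int d" using \<open>j < m0\<close> unfolding d_def by simp
    then show ?thesis using left[of d] that by simp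
  qed
  have r0: "m0 \<ge> int r" unfolding m0_def by simp
  have eq: "m_rl r l = m0"
    unfolding m_rl_def
  proof (rule the_equality)
    show "int r \<le> m0 \<and> (\<forall>j\<ge>int r. f_rl r l j \<le> f_rl r l m0)"
    proof (intro conjI allI impI)
      show "int r \<le> m0" by (rule r0)
      fix j assume "int r \<le> j"
      thus "f_rl r l j \<le> f_rl r l m0" using mx[of j] by (cases "j = m0") auto
    qed
  next
    fix k assume k: "int r \<le> k \<and> (\<forall>j\<ge>int r. f_rl r l j \<le> f_rl r l k)"
    show "k = m0"
    proof (rule ccontr)
      assume "k \<noteq> m0"
      hence "f_rl r l k < f_rl r l m0" using mx k by simp
      moreover have "f_rl r l m0 \<le> f_rl r l k" using k r0 by simp
      ultimately show False by simp
    qed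
  qed
  show ?thesis using eq t0le assms unfolding m0_def by simp
qed


theorem lemma4p4:
  fixes l r :: nat and m :: int and H :: "int \<Rightarrow> int"
  assumes "r \<ge> 2" and "l \<ge> 2 * r"
    and "m = m_rl r l"
    and "\<And>q. H q = (m - q) * falling_int q (r - 1)"
  shows "\<forall>q. 0 \<le> q \<and> q \<le> m \<and> q \<noteq> m - 1 \<longrightarrow> H q < H (m - 1)"
proof -
  define s where "s = r - 1"
  have s1: "s \<ge> 1" "int r = int s + 1" using assms unfolding s_def by auto
  have mb: "int r \<le> m" "m \<le> 2 * int r - 2" using m_char[OF assms(1,2)] assms(3) by auto
  define Q where "Q = (\<lambda>q::int. \<Prod>i<s. (q - int i))"
  have Hq: "H q = (if q \<ge> int s then (m - q) * Q q else 0)" for q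
    using assms(4)[of q] unfolding falling_int_def Q_def s_def by auto
  have Hm1: "H (m - 1) = Q (m - 1)" using Hq[of "m-1"] mb s1 by simp
  have Qp: "Q q > 0" if "q \<ge> int s" for q using Qpos[OF that] unfolding Q_def .
  have Hm1p: "H (m - 1) > 0" using Hm1 Qp[of "m-1"] mb s1 by simp
  have inc: "H q < H (q+1)" if "int s \<le> q" "q \<le> m - 2" for q
  proof -
    have sh: "Q (q+1) * (q + 1 - int s) = (q+1) * Q q" using Qshift[of q s] unfolding Q_def by simp
    have pos: "q + 1 - int s > 0" using that by simp
    have "(m - q) * int s \<ge> 2 * int s" using that by (intro mult_right_mono) auto
    hence key: "q + 1 < (m - q) * int s" using that mb s1 by linarith
    have "(m - q) * (q + 1 - int s) < (m - q - 1) * (q + 1)" using key by (simp add: algebra_simps)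
    hence "(m - q) * (q + 1 - int s) * Q q < (m - q - 1) * (q + 1) * Q q"
      using Qp[OF that(1)] by (intro mult_strict_right_mono) auto
    also have "\<dots> = (m - q - 1) * Q (q+1) * (q + 1 - int s)" using sh by (simp add: algebra_simps)
    finally have "(m - q) * Q q * (q + 1 - int s) < (m - q - 1) * Q (q+1) * (q + 1 - int s)"
      by (simp add: algebra_simps)
    hence "(m - q) * Q q < (m - q - 1) * Q (q+1)" using pos
      by (meson mult_less_cancel_right_pos)
    moreover have "H q = (m - q) * Q q" using Hq[of q] that by simp
    moreover have "H (q+1) = (m - q - 1) * Q (q+1)" using Hq[of "q+1"] that by (simp add: algebra_simps)
    ultimately show ?thesis by simp
  qed
  have chain: "\<forall>q. q = m - 2 - int d \<and> int s \<le> q \<longrightarrow> H q < H (m - 1)" for d :: nat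
  proof (induction d)
    case 0 show ?case using inc[of "m-2"] by auto
  next
    case (Suc d)
    show ?case
    proof (intro allI impI)
      fix q assume h: "q = m - 2 - int (Suc d) \<and> int s \<le> q"
      have "H q < H (q+1)" using inc[of q] h by simp
      also have "q + 1 = m - 2 - int d" using h by simp
      also have "H (m - 2 - int d) < H (m - 1)" using Suc h by simp
      finally show "H q < H (m - 1)" .
    qed
  qed
  show ?thesis
  proof (intro allI impI)
    fix q assume h: "0 \<le> q \<and> q \<le> m \<and> q \<noteq> m - 1"
    show "H q < H (m - 1)"
    proof (cases "q = m")
      case True then show ?thesis using Hq[of q] Hm1p by simp
    next
      case False
      show ?thesis
      proof (cases "q \<ge> int s")
        case True
        have "q \<le> m - 2" using h False by simp
        define d where "d = nat (m - 2 - q)"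
        have "q = m - 2 - int d" using \<open>q \<le> m - 2\<close> unfolding d_def by simp
        then show ?thesis using chain[of d] True by simp
      next
        case False then show ?thesis using Hq[of q] Hm1p by simp
      qed
    qed
  qed
qed

end
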